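(* Let $n\ge 2$, let $\mathcal{S}\subseteq(\mathbb{C}^d)^{\otimes n}$ be the permutation-symmetric subspace, let $|\psi\rangle\in\mathcal{S}$, and let $B$ be an invertible $d\times d$ complex matrix. Then $B_{(1)}B_{(2)}^{-1}|\psi\rangle=|\psi\rangle$ if and only if $B_{(1)}|\psi\rangle\in\mathcal{S}$.
   Context: $\mathcal{S}$ is the set of vectors in $(\mathbb{C}^d)^{\otimes n}$ invariant under all permutations of the $n$ tensor factors. For a $d\times d$ matrix $X$ and $1\le k\le n$, $X_{(k)}$ denotes $\mathbb{I}\otimes\cdots\otimes\mathbb{I}\otimes X\otimes\mathbb{I}\otimes\cdots\otimes\mathbb{I}$ with $X$ in the $k$-th position of the $n$-fold tensor product. *)

theory Defs
  imports "HOL-Analysis.Analysis" "HOL-Combinatorics.Permutations"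
begin

text \<open>A vector in the n-fold tensor power of C^d (with d = CARD('d)) is represented by its
coordinates with respect to the product basis: a function from index tuples
(lists over 'd of length n) to complex numbers. Values at lists of other lengths are irrelevant.\<close>

type_synonym 'd tvec = "'d list \<Rightarrow> complex"

definition tvec_eq :: "nat \<Rightarrow> 'd tvec \<Rightarrow> 'd tvec \<Rightarrow> bool" where
  "tvec_eq n \<phi> \<psi> \<longleftrightarrow> (\<forall>i. length i = n \<longrightarrow> \<phi> i = \<psi> i)"

definition sym_space :: "nat \<Rightarrow> 'd tvec \<Rightarrow> bool" where
  "sym_space n \<psi> \<longleftrightarrow>
     (\<forall>\<sigma> i. \<sigma> permutes {..<n} \<longrightarrow> length i = n \<longrightarrow> \<psi> (permute_list \<sigma> i) = \<psi> i)"

text \<open>X_(k): X acting on tensor factor k (0-based), identity elsewhere.\<close>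
definition op_at :: "nat \<Rightarrow> complex^'d^'d \<Rightarrow> 'd::finite tvec \<Rightarrow> 'd tvec" where
  "op_at k X \<psi> = (\<lambda>i. \<Sum>j\<in>UNIV. X $ (i ! k) $ j * \<psi> (i[k := j]))"

end

theory Submission
  imports Defs
begin

lemma inv_right:
  fixes B :: "complex^'d::finite^'d"
  assumes "invertible B" shows "B ** matrix_inv B = mat 1"
  using assms unfolding invertible_def matrix_inv_def by (rule someI_ex[THEN conjunct1])

lemma inv_left:
  fixes B :: "complex^'d::finite^'d"
  assumes "invertible B" shows "matrix_inv B ** B = mat 1"
  using assms unfolding invertible_def matrix_inv_def by (rule someI_ex[THEN conjunct2])

lemma tv_sym: "tvec_eq n a b \<Longrightarrow> tvec_eq n b a" unfolding tvec_eq_def by auto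
lemma tv_trans: "tvec_eq n a b \<Longrightarrow> tvec_eq n b c \<Longrightarrow> tvec_eq n a c" unfolding tvec_eq_def by auto

lemma op_at_cong:
  assumes "tvec_eq n \<phi> \<psi>" shows "tvec_eq n (op_at k X \<phi>) (op_at k X \<psi>)"
  using assms unfolding tvec_eq_def op_at_def by auto

lemma op_at_comm:
  assumes "length i \<ge> 2"
  shows "op_at 0 X (op_at 1 Y \<psi>) i = op_at 1 Y (op_at 0 X \<psi>) i"
proof -
  have "op_at 0 X (op_at 1 Y \<psi>) i = (\<Sum>j\<in>UNIV. \<Sum>l\<in>UNIV. X $ (i!0) $ j * (Y $ (i!1) $ l * \<psi> ((i[0:=j])[1:=l])))"
    using assms by (simp add: op_at_def sum_distrib_left)
  also have "\<dots> = (\<Sum>l\<in>UNIV. \<Sum>j\<in>UNIV. X $ (i!0) $ j * (Y $ (i!1) $ l * \<psi> ((i[0:=j])[1:=l])))"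
    by (rule sum.swap)
  also have "\<dots> = op_at 1 Y (op_at 0 X \<psi>) i"
    using assms by (simp add: op_at_def sum_distrib_left list_update_swap mult.left_commute)
  finally show ?thesis .
qed

lemma op_at_comp:
  assumes "k < length i"
  shows "op_at k X (op_at k Y \<psi>) i = op_at k (X ** Y) \<psi> i"
proof -
  have "op_at k X (op_at k Y \<psi>) i = (\<Sum>j\<in>UNIV. \<Sum>l\<in>UNIV. X $ (i!k) $ j * (Y $ j $ l * \<psi> (i[k:=l])))"
    using assms by (simp add: op_at_def sum_distrib_left)
  also have "\<dots> = (\<Sum>l\<in>UNIV. \<Sum>j\<in>UNIV. X $ (i!k) $ j * (Y $ j $ l * \<psi> (i[k:=l])))"
    by (rule sum.swap)
  also have "\<dots> = op_at k (X ** Y) \<psi> i"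
    by (simp add: op_at_def matrix_matrix_mult_def sum_distrib_right mult.assoc)
  finally show ?thesis .
qed

lemma op_at_id:
  assumes "k < length i"
  shows "op_at k (mat 1) \<psi> i = \<psi> i"
proof -
  have "op_at k (mat 1) \<psi> i = (\<Sum>j\<in>UNIV. if j = i!k then \<psi> (i[k:=j]) else 0)"
    unfolding op_at_def by (rule sum.cong) (auto simp: mat_def)
  also have "\<dots> = \<psi> i" using assms by simp
  finally show ?thesis .
qed

lemma op_at_perm:
  assumes "sym_space n \<psi>" "\<sigma> permutes {..<n}" "length i = n" "k < n"
  shows "op_at k X \<psi> (permute_list \<sigma> i) = op_at (\<sigma> k) X \<psi> i"
proof -
  have sk: "\<sigma> k < n" using assms permutes_in_image by fastforce
  have eq: "(permute_list \<sigma> i)[k := j] = permute_list \<sigma> (i[\<sigma> k := j])" for j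
  proof (rule nth_equalityI)
    fix m assume m: "m < length ((permute_list \<sigma> i)[k := j])"
    hence mn: "m < n" using assms by simp
    have sm: "\<sigma> m < n" using assms mn permutes_in_image by fastforce
    have "\<sigma> m = \<sigma> k \<longleftrightarrow> m = k" using assms(2) by (metis permutes_inj injD)
    thus "(permute_list \<sigma> i)[k := j] ! m = permute_list \<sigma> (i[\<sigma> k := j]) ! m"
      using mn sm sk assms by (auto simp: permute_list_nth nth_list_update)
  qed (simp)
  show ?thesis
    unfolding op_at_def
  proof (rule sum.cong[OF refl])
    fix j
    have "\<psi> (permute_list \<sigma> (i[\<sigma> k := j])) = \<psi> (i[\<sigma> k := j])"
      using assms(1,2,3) unfolding sym_space_def by simp
    moreover have "permute_list \<sigma> i ! k = i ! \<sigma> k" using assms by (simp add: permute_list_nth)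
    ultimately show "X $ (permute_list \<sigma> i ! k) $ j * \<psi> ((permute_list \<sigma> i)[k := j]) =
          X $ (i ! \<sigma> k) $ j * \<psi> (i[\<sigma> k := j])" by (simp add: eq)
  qed
qed

lemma comm_tv: "n \<ge> 2 \<Longrightarrow> tvec_eq n (op_at 0 X (op_at 1 Y \<psi>)) (op_at 1 Y (op_at 0 X \<psi>))"
  unfolding tvec_eq_def using op_at_comm by auto
lemma comp_tv: "k < n \<Longrightarrow> tvec_eq n (op_at k X (op_at k Y \<psi>)) (op_at k (X ** Y) \<psi>)"
  unfolding tvec_eq_def using op_at_comp by auto
lemma id_tv: "k < n \<Longrightarrow> tvec_eq n (op_at k (mat 1) \<psi>) \<psi>"
  unfolding tvec_eq_def using op_at_id by auto

theorem lemma1: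
  fixes n :: nat and \<psi> :: "'d::finite tvec" and B :: "complex^'d^'d"
  assumes "n \<ge> 2"
    and "sym_space n \<psi>"
    and "invertible B"
  shows "tvec_eq n (op_at 0 B (op_at 1 (matrix_inv B) \<psi>)) \<psi> \<longleftrightarrow> sym_space n (op_at 0 B \<psi>)"
proof -
  let ?Bi = "matrix_inv B"
  have BBi: "B ** ?Bi = mat 1" using assms(3) by (rule inv_right)
  have BiB: "?Bi ** B = mat 1" using assms(3) by (rule inv_left)
  have n1: "1 < n" "0 < n" using assms(1) by auto
  have step1: "tvec_eq n (op_at 0 B (op_at 1 ?Bi \<psi>)) \<psi> \<longleftrightarrow> tvec_eq n (op_at 0 B \<psi>) (op_at 1 B \<psi>)"
  proof
    assume h: "tvec_eq n (op_at 0 B (op_at 1 ?Bi \<psi>)) \<psi>"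
    have a: "tvec_eq n (op_at 1 B (op_at 0 B (op_at 1 ?Bi \<psi>))) (op_at 1 B \<psi>)"
      by (rule op_at_cong[OF h])
    have b: "tvec_eq n (op_at 0 B (op_at 1 B (op_at 1 ?Bi \<psi>))) (op_at 1 B (op_at 0 B (op_at 1 ?Bi \<psi>)))"
      by (rule comm_tv[OF assms(1)])
    have c: "tvec_eq n (op_at 1 B (op_at 1 ?Bi \<psi>)) \<psi>"
      using tv_trans[OF comp_tv[OF n1(1), of B ?Bi \<psi>, unfolded BBi] id_tv[OF n1(1), of \<psi>]] .
    have d: "tvec_eq n (op_at 0 B (op_at 1 B (op_at 1 ?Bi \<psi>))) (op_at 0 B \<psi>)"
      by (rule op_at_cong[OF c])
    show "tvec_eq n (op_at 0 B \<psi>) (op_at 1 B \<psi>)"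
      by (meson a b d tv_sym tv_trans)
  next
    assume h: "tvec_eq n (op_at 0 B \<psi>) (op_at 1 B \<psi>)"
    have a: "tvec_eq n (op_at 1 ?Bi (op_at 0 B \<psi>)) (op_at 1 ?Bi (op_at 1 B \<psi>))"
      by (rule op_at_cong[OF h])
    have c: "tvec_eq n (op_at 1 ?Bi (op_at 1 B \<psi>)) \<psi>"
      using tv_trans[OF comp_tv[OF n1(1), of ?Bi B \<psi>, unfolded BiB] id_tv[OF n1(1), of \<psi>]] .
    have b: "tvec_eq n (op_at 0 B (op_at 1 ?Bi \<psi>)) (op_at 1 ?Bi (op_at 0 B \<psi>))"
      by (rule comm_tv[OF assms(1)])
    show "tvec_eq n (op_at 0 B (op_at 1 ?Bi \<psi>)) \<psi>"
      by (meson a b c tv_trans)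
  qed
  have perm: "op_at 0 B \<psi> (permute_list \<sigma> i) = op_at (\<sigma> 0) B \<psi> i"
    if "\<sigma> permutes {..<n}" "length i = n" for \<sigma> i
    using op_at_perm[OF assms(2) that n1(2)] .
  have step2: "sym_space n (op_at 0 B \<psi>) \<longleftrightarrow> tvec_eq n (op_at 0 B \<psi>) (op_at 1 B \<psi>)"
  proof
    assume s: "sym_space n (op_at 0 B \<psi>)"
    have t: "Transposition.transpose 0 1 permutes {..<n}" using n1 by (intro permutes_swap_id) auto
    show "tvec_eq n (op_at 0 B \<psi>) (op_at 1 B \<psi>)"
      unfolding tvec_eq_def
    proof (intro allI impI)
      fix i :: "'d list" assume l: "length i = n"
      have "op_at 0 B \<psi> i = op_at 0 B \<psi> (permute_list (Transposition.transpose 0 1) i)"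
        using s t l unfolding sym_space_def by simp
      also have "\<dots> = op_at 1 B \<psi> i" using perm[OF t l] by simp
      finally show "op_at 0 B \<psi> i = op_at 1 B \<psi> i" .
    qed
  next
    assume h: "tvec_eq n (op_at 0 B \<psi>) (op_at 1 B \<psi>)"
    have all: "op_at k B \<psi> i = op_at 0 B \<psi> i" if "k < n" "length i = n" for k i
    proof (cases "k \<le> 1")
      case True
      then consider "k = 0" | "k = 1" by linarith
      then show ?thesis using h that unfolding tvec_eq_def by cases auto
    next
      case False
      have t: "Transposition.transpose 1 k permutes {..<n}" using n1 that by (intro permutes_swap_id) auto
      have l': "length (permute_list (Transposition.transpose 1 k) i) = n" using that by simp
      have "op_at 0 B \<psi> i = op_at 0 B \<psi> (permute_list (Transposition.transpose 1 k) i)"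
        using op_at_perm[OF assms(2) t that(2) n1(2)] False by simp
      also have "\<dots> = op_at 1 B \<psi> (permute_list (Transposition.transpose 1 k) i)"
        using h l' unfolding tvec_eq_def by simp
      also have "\<dots> = op_at k B \<psi> i"
        using op_at_perm[OF assms(2) t that(2) n1(1)] by simp
      finally show ?thesis by simp
    qed
    show "sym_space n (op_at 0 B \<psi>)"
      unfolding sym_space_def
    proof (intro allI impI)
      fix \<sigma> and i :: "'d list" assume s: "\<sigma> permutes {..<n}" and l: "length i = n"
      have "\<sigma> 0 < n" using s n1 permutes_in_image by fastforce
      thus "op_at 0 B \<psi> (permute_list \<sigma> i) = op_at 0 B \<psi> i"
        using perm[OF s l] all[of "\<sigma> 0" i] l by simp
    qed
  qed
  show ?thesis using step1 step2 by simp
qed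

end
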